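(* Let $\mathfrak{g}$ be a filiform Lie algebra of dimension $n$ over a field $K$ of characteristic zero, with adapted basis $\{e_1,\dots,e_n\}$ and $\mathfrak{g}_i=\langle e_i,\dots,e_n\rangle$. Suppose $[\mathfrak{g}_k,\mathfrak{g}_k]=0$ for some $k\ge2$. Then $\chi(\mathfrak{g})\ge n-2(k-1)$.
   Context: A filiform Lie algebra of dimension $n$ is a nilpotent Lie algebra with $\dim\mathfrak{g}^k=n-k$ for $2\le k\le n$ (lower central series $\mathfrak{g}^1=\mathfrak{g}$, $\mathfrak{g}^{k+1}=[\mathfrak{g},\mathfrak{g}^k]$). An adapted basis is a basis $\{e_1,\dots,e_n\}$ with $[e_1,e_i]=e_{i+1}$ ($2\le i\le n-1$), $[e_1,e_n]=0$, $[e_2,e_3]\in\langle e_5,\dots,e_n\rangle$; such bases exist. For $\ell\in\mathfrak{g}^*$, $\mathfrak{g}(\ell)=\{y\in\mathfrak{g}\mid\ell([x,y])=0\ \forall x\in\mathfrak{g}\}$ and $\chi(\mathfrak{g})=\min_{\ell\in\mathfrak{g}^*}\dim\mathfrak{g}(\ell)$. *)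

theory Defs
  imports Main "HOL.Vector_Spaces"
begin

definition lie_algebra ::
  "('k::field \<Rightarrow> 'v::ab_group_add \<Rightarrow> 'v) \<Rightarrow> ('v \<Rightarrow> 'v \<Rightarrow> 'v) \<Rightarrow> bool" where
  "lie_algebra sc br \<longleftrightarrow>
     Vector_Spaces.vector_space sc \<and>
     (\<forall>x y z. br (x + y) z = br x z + br y z) \<and>
     (\<forall>x y z. br x (y + z) = br x y + br x z) \<and>
     (\<forall>a x y. br (sc a x) y = sc a (br x y)) \<and>
     (\<forall>a x y. br x (sc a y) = sc a (br x y)) \<and>
     (\<forall>x. br x x = 0) \<and>
     (\<forall>x y z. br x (br y z) + br y (br z x) + br z (br x y) = 0)"

fun lower_central ::
  "('k::field \<Rightarrow> 'v::ab_group_add \<Rightarrow> 'v) \<Rightarrow> ('v \<Rightarrow> 'v \<Rightarrow> 'v) \<Rightarrow> nat \<Rightarrow> 'v set" where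
  "lower_central sc br 0 = UNIV"
| "lower_central sc br (Suc 0) = UNIV"
| "lower_central sc br (Suc (Suc k)) =
     module.span sc {br x y | x y. y \<in> lower_central sc br (Suc k)}"

definition nilpotent_lie ::
  "('k::field \<Rightarrow> 'v::ab_group_add \<Rightarrow> 'v) \<Rightarrow> ('v \<Rightarrow> 'v \<Rightarrow> 'v) \<Rightarrow> bool" where
  "nilpotent_lie sc br \<longleftrightarrow> (\<exists>m\<ge>1. lower_central sc br m = {0})"

definition filiform ::
  "('k::field \<Rightarrow> 'v::ab_group_add \<Rightarrow> 'v) \<Rightarrow> ('v \<Rightarrow> 'v \<Rightarrow> 'v) \<Rightarrow> nat \<Rightarrow> bool" where
  "filiform sc br n \<longleftrightarrow>
     lie_algebra sc br \<and> vector_space.dim sc (UNIV :: 'v set) = n \<and>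
     nilpotent_lie sc br \<and>
     (\<forall>k. 2 \<le> k \<and> k \<le> n \<longrightarrow> vector_space.dim sc (lower_central sc br k) = n - k)"

definition adapted_basis ::
  "('k::field \<Rightarrow> 'v::ab_group_add \<Rightarrow> 'v) \<Rightarrow> ('v \<Rightarrow> 'v \<Rightarrow> 'v) \<Rightarrow> nat \<Rightarrow> (nat \<Rightarrow> 'v) \<Rightarrow> bool" where
  "adapted_basis sc br n e \<longleftrightarrow>
     inj_on e {1..n} \<and>
     \<not> module.dependent sc (e ` {1..n}) \<and>
     module.span sc (e ` {1..n}) = UNIV \<and>
     (\<forall>i. 2 \<le> i \<and> i \<le> n - 1 \<longrightarrow> br (e 1) (e i) = e (i + 1)) \<and>
     br (e 1) (e n) = 0 \<and>
     br (e 2) (e 3) \<in> module.span sc (e ` {5..n})"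

definition stabilizer ::
  "('v \<Rightarrow> 'v \<Rightarrow> 'v) \<Rightarrow> ('v \<Rightarrow> 'k::zero) \<Rightarrow> 'v set" where
  "stabilizer br l = {y. \<forall>x. l (br x y) = 0}"

definition chi ::
  "('k::field \<Rightarrow> 'v::ab_group_add \<Rightarrow> 'v) \<Rightarrow> ('v \<Rightarrow> 'v \<Rightarrow> 'v) \<Rightarrow> nat" where
  "chi sc br = Min {vector_space.dim sc (stabilizer br l) | l.
                      Vector_Spaces.linear sc ((*) :: 'k \<Rightarrow> 'k \<Rightarrow> 'k) l}"

end

theory Submission imports Defs begin

context finite_dimensional_vector_space
begin

lemma ker_subspace:
  assumes add: "\<And>x y. f (x + y) = f x + f y" and hom: "\<And>c x. f (c *s x) = c * f x"
  shows "subspace {y. f y = (0::'a)}"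
proof -
  have "f 0 + f 0 = f 0 + 0" using add[of 0 0] by simp
  then have "f 0 = 0" by (rule add_left_imp_eq)
  then show ?thesis by (auto intro!: subspaceI simp: add hom)
qed

lemma dim_inter_ker:
  assumes S: "subspace S"
    and add: "\<And>x y. f (x + y) = f x + f y" and hom: "\<And>c x. f (c *s x) = c * f x"
  shows "dim S \<le> dim (S \<inter> {y. f y = (0::'a)}) + 1"
proof (cases "S \<subseteq> {y. f y = 0}")
  case True
  then have "S \<inter> {y. f y = 0} = S" by blast
  then show ?thesis by simp
next
  case False
  then obtain s where s: "s \<in> S" "f s \<noteq> 0" by blast
  let ?T = "S \<inter> {y. f y = 0}"
  have diff: "f (v - w) = f v - f w" for v w
    using add[of "v - w" w] by (simp add: eq_diff_eq)
  have "S \<subseteq> span (insert s ?T)"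
  proof
    fix v assume v: "v \<in> S"
    define c where "c = f v / f s"
    have "v - c *s s \<in> ?T"
      using v s S by (simp add: subspace_diff subspace_scale diff hom c_def)
    then have 1: "v - c *s s \<in> span (insert s ?T)" by (simp add: span_base)
    have 2: "c *s s \<in> span (insert s ?T)" by (simp add: span_base span_scale)
    have "v = (v - c *s s) + c *s s" by simp
    then show "v \<in> span (insert s ?T)" using span_add[OF 1 2] by metis
  qed
  then have "dim S \<le> dim (insert s ?T)" by (rule dim_mono)
  also have "\<dots> \<le> dim ?T + 1" by (simp add: dim_insert)
  finally show ?thesis .
qed

lemma dim_inter_kers:
  assumes I: "finite I" and S: "subspace S"
    and add: "\<And>i x y. i \<in> I \<Longrightarrow> f i (x + y) = f i x + f i y"
    and hom: "\<And>i c x. i \<in> I \<Longrightarrow> f i (c *s x) = c * f i x"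
  shows "dim S \<le> dim (S \<inter> {y. \<forall>i\<in>I. f i y = (0::'a)}) + card I"
  using I add hom
proof (induction I rule: finite_induct)
  case empty
  then show ?case by simp
next
  case (insert i I)
  let ?T = "S \<inter> {y. \<forall>j\<in>I. f j y = 0}"
  have sub: "subspace ?T"
  proof -
    have "subspace (\<Inter>j\<in>I. {y. f j y = 0})"
      by (rule subspace_Inter) (auto intro!: ker_subspace insert.prems)
    moreover have "(\<Inter>j\<in>I. {y. f j y = 0}) = {y. \<forall>j\<in>I. f j y = 0}" by auto
    ultimately show ?thesis using S subspace_inter by metis
  qed
  have IH: "dim S \<le> dim ?T + card I" using insert by auto
  have "dim ?T \<le> dim (?T \<inter> {y. f i y = 0}) + 1"
    by (rule dim_inter_ker[OF sub]) (auto intro: insert.prems)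
  moreover have "?T \<inter> {y. f i y = 0} = S \<inter> {y. \<forall>j\<in>insert i I. f j y = 0}" by auto
  ultimately show ?case using IH insert.hyps by simp
qed

end

theorem theorem6p4:
  fixes sc :: "'k::field_char_0 \<Rightarrow> 'v::ab_group_add \<Rightarrow> 'v"
    and br :: "'v \<Rightarrow> 'v \<Rightarrow> 'v"
    and n k :: nat
    and e :: "nat \<Rightarrow> 'v"
  assumes "filiform sc br n"
    and "adapted_basis sc br n e"
    and "2 \<le> k"
    and "\<forall>x \<in> module.span sc (e ` {k..n}). \<forall>y \<in> module.span sc (e ` {k..n}). br x y = 0"
  shows "int (chi sc br) \<ge> int n - 2 * (int k - 1)"
proof (cases "k \<le> n")
  case False
  then have "int n < int k" by simp
  moreover have "0 \<le> int (chi sc br)" by simp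
  ultimately show ?thesis by (simp add: algebra_simps)
next
  case kn: True
  have lie: "lie_algebra sc br" and dimU: "vector_space.dim sc (UNIV :: 'v set) = n"
    using assms(1) unfolding filiform_def by auto
  have vs: "vector_space sc" using lie unfolding lie_algebra_def by auto
  have badd: "\<And>x y z. br (x + y) z = br x z + br y z"
    and bscale: "\<And>a x y. br (sc a x) y = sc a (br x y)"
    using lie unfolding lie_algebra_def by auto
  have inj: "inj_on e {1..n}" and ind: "\<not> module.dependent sc (e ` {1..n})"
    and sp: "module.span sc (e ` {1..n}) = UNIV"
    using assms(2) unfolding adapted_basis_def by auto
  interpret V: finite_dimensional_vector_space sc "e ` {1..n}"
    by (unfold_locales) (use vs ind sp in \<open>auto simp: vector_space_def\<close>)
  have vsk: "vector_space ((*) :: 'k \<Rightarrow> 'k \<Rightarrow> 'k)"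
    by (unfold_locales) (auto simp: algebra_simps)
  have br0: "br 0 y = 0" for y
  proof -
    have "br 0 y + br 0 y = br 0 y + 0" using badd[of 0 0 y] by simp
    then show ?thesis by (rule add_left_imp_eq)
  qed
  define A where "A = V.span (e ` {k..n})"
  have indA: "V.independent (e ` {k..n})"
  proof (rule V.independent_mono)
    show "V.independent (e ` {1..n})" using ind .
    show "e ` {k..n} \<subseteq> e ` {1..n}" using assms(3) by auto
  qed
  have injA: "inj_on e {k..n}" using inj by (rule inj_on_subset) (use assms(3) in auto)
  have dimA: "V.dim A = n - k + 1"
    unfolding A_def using V.dim_span_eq_card_independent[OF indA] card_image[OF injA] kn by simp
  let ?B = "int n - 2 * (int k - 1)"
  have bound: "?B \<le> int (V.dim (stabilizer br l))"
    if lin: "Vector_Spaces.linear sc ((*) :: 'k \<Rightarrow> 'k \<Rightarrow> 'k) l" for l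
  proof -
    have ladd: "\<And>x y. l (x + y) = l x + l y" and lsc: "\<And>c x. l (sc c x) = c * l x"
      using lin unfolding linear_iff by auto
    have l0: "l 0 = 0"
    proof -
      have "l 0 + l 0 = l 0 + 0" using ladd[of 0 0] by simp
      then show ?thesis by (rule add_left_imp_eq)
    qed
    define f where "f i y = l (br (e i) y)" for i y
    have badd2: "\<And>x y z. br x (y + z) = br x y + br x z"
      and bscale2: "\<And>a x y. br x (sc a y) = sc a (br x y)"
      using lie unfolding lie_algebra_def by auto
    define W where "W = A \<inter> {y. \<forall>i\<in>{1..<k}. f i y = 0}"
    have "V.dim A \<le> V.dim W + card {1..<k}"
      unfolding W_def
      by (rule V.dim_inter_kers) (auto simp: A_def f_def badd2 bscale2 ladd lsc)
    moreover have "W \<subseteq> stabilizer br l"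
    proof
      fix y assume y: "y \<in> W"
      have "l (br x y) = 0" for x
      proof -
        have "x \<in> V.span (e ` {1..n})" using sp by simp
        then show ?thesis
        proof (induction rule: V.span_induct)
          case base
          show ?case
            by (rule V.subspaceI) (auto simp: br0 l0 badd bscale ladd lsc)
        next
          case (step x)
          then obtain i where i: "i \<in> {1..n}" "x = e i" by auto
          show ?case
          proof (cases "i < k")
            case True
            then show ?thesis using y i unfolding W_def f_def by auto
          next
            case False
            then have "e i \<in> A" using i unfolding A_def by (auto intro!: V.span_base)
            moreover have "y \<in> A" using y W_def by auto
            ultimately show ?thesis using assms(4) i l0 unfolding A_def by auto
          qed
        qed
      qed
      then show "y \<in> stabilizer br l" unfolding stabilizer_def by auto
    qed
    then have "V.dim W \<le> V.dim (stabilizer br l)" by (rule V.dim_subset)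
    ultimately show ?thesis using dimA kn assms(3) by simp
  qed
  define S where "S = {vector_space.dim sc (stabilizer br l) | l.
                      Vector_Spaces.linear sc ((*) :: 'k \<Rightarrow> 'k \<Rightarrow> 'k) l}"
  have fin: "finite S"
  proof (rule finite_subset)
    show "S \<subseteq> {..V.dimension}" unfolding S_def using V.dim_subset_UNIV by auto
  qed simp
  have "Vector_Spaces.linear sc ((*) :: 'k \<Rightarrow> 'k \<Rightarrow> 'k) (\<lambda>_. 0)"
    unfolding linear_iff using vs vsk by simp
  then have ne: "S \<noteq> {}" unfolding S_def by blast
  have "chi sc br \<in> S" unfolding chi_def S_def[symmetric] using Min_in[OF fin ne] .
  then show ?thesis using bound unfolding S_def by auto
qed

end
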